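(* Let $N \ge 2$ and $r\geq 1$ be integers and $(s_1,\ldots,s_r)\in U_r$. Then for $r=1$, we have \begin{equation*} \left(1-\frac{1}{z_1}\right)\mathrm{Li}^{\star}_{(z_1)}(s_1-1)_{\geq N} + \frac{z_1^{N-1}}{N^{s_1-1}} =\sum_{k\geq0} (-1)^k\frac{(s_1-1)_{k+1}}{(k+1)!}\mathrm{Li}^{\star}_{(z_1)}(s_1+k)_{\geq N}, \end{equation*} and for $r>1$, we have \begin{align*} &\left(1-\frac{1}{z_1}\right)\mathrm{Li}^{\star}_{(z_1,\ldots,z_r)}(s_1-1,s_{2},\ldots,s_r)_{\geq N}+ \frac{1}{z_1}\mathrm{Li}^{\star}_{(z_1z_2,z_{3},\ldots,z_r)}(s_1+s_{2}-1,s_{3},\ldots,s_r)_{\geq N}\\ &=\sum_{k\geq0}(-1)^k\frac{(s_1-1)_{k+1}}{(k+1)!}\mathrm{Li}^{\star}_{(z_1,\ldots,z_r)}(s_1+k,s_2,\ldots,s_r)_{\geq N}, \end{align*} where for any complex number $s$ and non-negative integer $k$, $(s)_k$ denotes the Pochhammer symbol $s(s+1)\cdots(s+k-1)$.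
   Context: Let $r\geq 1$ be an integer and let $\mathbf{z}=(z_1,\ldots,z_r)\in\mathbb{C}^r$ with $|z_i|\le 1$ for all $1\le i\le r$ (in the paper the $z_i$ are typically roots of unity). Let $U_r := \{ (s_1, \ldots, s_r) \in \mathbb{C}^r : \Re(s_1 + \cdots + s_i) > i \text{ for all } 1 \le i \le r \}$. For an integer $N\geq1$ and $(s_1,\ldots,s_r)\in U_r$, the tail of the multiple polylogarithm-star function is $$\mathrm{Li}^{\star}_{(z_1,\ldots,z_r)}(s_1,\ldots,s_r)_{\geq N} := \sum_{n_1\geq \cdots \geq n_r \geq N}\frac{z_1^{n_1}\cdots z_r^{n_r}}{n_1^{s_1}\cdots n_r^{s_r}},$$ which is holomorphic on $U_r$ and extends meromorphically to $\mathbb{C}^r$. In both identities the first term on the left-hand side is considered to be $0$ if $z_1=1$; when $z_1\ne 1$, the series defining $\mathrm{Li}^{\star}_{(z_1,\ldots,z_r)}(s_1-1,s_{2},\ldots,s_r)_{\geq N}$ converges (as a limit of partial sums) for $(s_1,\ldots,s_r)\in U_r$. *)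

theory Defs
  imports "HOL-Analysis.Analysis"
begin

text \<open>Finite partial sum of the multiple polylogarithm-star tail:
  sum over M >= n_1 >= n_2 >= ... >= n_r >= N of
  z_1^n_1 ... z_r^n_r / (n_1^s_1 ... n_r^s_r).\<close>
fun Li_star_fin :: "complex list \<Rightarrow> complex list \<Rightarrow> nat \<Rightarrow> nat \<Rightarrow> complex" where
  "Li_star_fin [] [] N M = 1"
| "Li_star_fin (z # zs) (s # ss) N M =
     (\<Sum>n = N..M. z ^ n / (of_nat n powr s) * Li_star_fin zs ss N n)"
| "Li_star_fin _ _ N M = 0"

definition Li_star_tail :: "complex list \<Rightarrow> complex list \<Rightarrow> nat \<Rightarrow> complex" where
  "Li_star_tail zs ss N = lim (\<lambda>M. Li_star_fin zs ss N M)"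

definition in_U :: "complex list \<Rightarrow> bool" where
  "in_U ss \<longleftrightarrow> (\<forall>i\<in>{1..length ss}. Re (sum_list (take i ss)) > real i)"

end

theory Submission
  imports Defs
begin


fun Ab :: "real list \<Rightarrow> nat \<Rightarrow> nat \<Rightarrow> real" where
  "Ab [] N M = 1"
| "Ab (\<sigma> # \<sigma>s) N M = (\<Sum>n = N..M. real n powr (-\<sigma>) * Ab \<sigma>s N n)"

lemma Ab_nonneg: "0 \<le> Ab \<sigma>s N M"
  by (induction \<sigma>s arbitrary: M) (auto intro!: sum_nonneg)

lemma Re_sum_list: "Re (sum_list xs) = sum_list (map Re xs)"
  by (induction xs) auto

lemma norm_Li_le:
  assumes "length zs = length ss" "\<forall>w\<in>set zs. norm w \<le> 1" "N \<ge> 1"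
  shows "norm (Li_star_fin zs ss N M) \<le> Ab (map Re ss) N M"
  using assms
proof (induction zs ss arbitrary: M rule: list_induct2)
  case Nil
  then show ?case by simp
next
  case (Cons z zs s ss)
  have "norm (Li_star_fin (z # zs) (s # ss) N M) \<le>
        (\<Sum>n = N..M. norm (z ^ n / (of_nat n powr s) * Li_star_fin zs ss N n))"
    by (simp add: norm_sum)
  also have "\<dots> \<le> (\<Sum>n = N..M. real n powr (-Re s) * Ab (map Re ss) N n)"
  proof (rule sum_mono)
    fix n assume n: "n \<in> {N..M}"
    then have npos: "n > 0" using Cons by auto
    have nz: "norm z ^ n \<le> 1" using Cons by (simp add: power_le_one)
    have "norm (of_nat n powr s :: complex) = real n powr Re s"
      by (subst norm_powr_real_powr) auto
    then have "norm (z ^ n / (of_nat n powr s) * Li_star_fin zs ss N n)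
        = norm z ^ n * real n powr (-Re s) * norm (Li_star_fin zs ss N n)"
      by (simp add: norm_mult norm_divide norm_power powr_minus divide_inverse norm_inverse)
    also have "\<dots> \<le> 1 * real n powr (-Re s) * Ab (map Re ss) N n"
      by (intro mult_mono Cons.IH) (use Cons nz in auto)
    finally show "norm (z ^ n / (of_nat n powr s) * Li_star_fin zs ss N n) \<le> real n powr (-Re s) * Ab (map Re ss) N n" by simp
  qed
  finally show ?case by simp
qed

lemma choose_exp:
  fixes S :: "real set"
  assumes "finite S" "\<forall>x\<in>S. x < b" "0 < b"
  shows "\<exists>e. 0 \<le> e \<and> e < b \<and> (\<forall>x\<in>S. x < e)"
proof -
  define m where "m = Max (insert 0 S)"
  have "m \<in> insert 0 S" unfolding m_def using assms by (intro Max_in) auto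
  then have mb: "m < b" using assms by auto
  have m0: "0 \<le> m" and mS: "\<forall>x\<in>S. x \<le> m" unfolding m_def using assms by auto
  show ?thesis
    by (rule exI[of _ "(m + b) / 2"]) (use mb m0 mS in fastforce)
qed

lemma Ab_growth:
  assumes "N \<ge> 1" "e \<ge> 0" "\<forall>i\<in>{1..length \<sigma>s}. e > real i - sum_list (take i \<sigma>s)"
  shows "\<exists>C. \<forall>M\<ge>1. Ab \<sigma>s N M \<le> C * real M powr e"
  using assms(2,3)
proof (induction \<sigma>s arbitrary: e)
  case Nil
  then show ?case by (auto intro!: exI[of _ 1] ge_one_powr_ge_zero)
next
  case (Cons \<sigma> \<sigma>s)
  define S where "S = (\<lambda>i. real i - sum_list (take i \<sigma>s)) ` {1..length \<sigma>s}"
  have h1: "e > 1 - \<sigma>" using Cons.prems(2)[rule_format, of 1] by simp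
  have hS: "\<forall>x\<in>S. x < e + \<sigma> - 1"
  proof
    fix x assume "x \<in> S"
    then obtain i where i: "i \<in> {1..length \<sigma>s}" "x = real i - sum_list (take i \<sigma>s)"
      unfolding S_def by auto
    have "e > real (Suc i) - sum_list (take (Suc i) (\<sigma> # \<sigma>s))"
      using Cons.prems(2)[rule_format, of "Suc i"] i by auto
    then show "x < e + \<sigma> - 1" using i by simp
  qed
  obtain e' where e': "0 \<le> e'" "e' < e + \<sigma> - 1" "\<forall>x\<in>S. x < e'"
    using choose_exp[of S "e + \<sigma> - 1"] hS h1 unfolding S_def by auto
  have "\<forall>i\<in>{1..length \<sigma>s}. e' > real i - sum_list (take i \<sigma>s)"
    using e'(3) unfolding S_def by auto
  from Cons.IH[OF e'(1) this] obtain C where C: "\<forall>M\<ge>1. Ab \<sigma>s N M \<le> C * real M powr e'"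
    by blast
  have C0: "C \<ge> 0" using C[rule_format, of 1] Ab_nonneg[of \<sigma>s N 1] by simp
  define p where "p = e' - \<sigma> - e"
  have p: "p < -1" using e' unfolding p_def by simp
  have summ: "summable (\<lambda>n. real n powr p)" using p by (simp add: summable_real_powr_iff)
  define Sm where "Sm = (\<Sum>n. real n powr p)"
  show ?case
  proof (intro exI[of _ "C * Sm"] allI impI)
    fix M :: nat assume M: "M \<ge> 1"
    have "Ab (\<sigma> # \<sigma>s) N M \<le> (\<Sum>n = N..M. real n powr (-\<sigma>) * (C * real n powr e'))"
      using C assms(1) by (auto intro!: sum_mono mult_left_mono)
    also have "\<dots> \<le> (\<Sum>n = N..M. C * (real M powr e * real n powr p))"
    proof (rule sum_mono)
      fix n assume n: "n \<in> {N..M}"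
      then have n1: "n \<ge> 1" using assms(1) by auto
      have "real n powr (-\<sigma>) * (C * real n powr e') = C * (real n powr e * real n powr p)"
        unfolding p_def using n1 by (simp add: powr_add[symmetric])
      also have "\<dots> \<le> C * (real M powr e * real n powr p)"
        using n n1 C0 Cons.prems(1) by (auto intro!: mult_left_mono mult_right_mono powr_mono2)
      finally show "real n powr (-\<sigma>) * (C * real n powr e') \<le> C * (real M powr e * real n powr p)" .
    qed
    also have "\<dots> = C * real M powr e * (\<Sum>n = N..M. real n powr p)"
      by (simp add: sum_distrib_left mult_ac)
    also have "\<dots> \<le> C * real M powr e * Sm"
      unfolding Sm_def using C0 by (intro mult_left_mono sum_le_suminf summ) auto
    finally show "Ab (\<sigma> # \<sigma>s) N M \<le> C * Sm * real M powr e" by (simp add: mult_ac)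
  qed
qed


lemma norm_nat_powr [simp]: "norm (of_nat m powr w :: complex) = real m powr Re w"
  by (subst norm_powr_real_powr) auto

lemma in_U_Cons:
  "in_U (s # ss) \<longleftrightarrow> (\<forall>j\<le>length ss. Re s + sum_list (map Re (take j ss)) > real j + 1)"
proof -
  have "in_U (s # ss) \<longleftrightarrow> (\<forall>i\<in>{1..Suc (length ss)}. Re (sum_list (take i (s # ss))) > real i)"
    unfolding in_U_def by simp
  also have "\<dots> \<longleftrightarrow> (\<forall>j\<le>length ss. Re (sum_list (take (Suc j) (s # ss))) > real (Suc j))"
  proof
    assume H: "\<forall>i\<in>{1..Suc (length ss)}. Re (sum_list (take i (s # ss))) > real i"
    show "\<forall>j\<le>length ss. Re (sum_list (take (Suc j) (s # ss))) > real (Suc j)"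
    proof (intro allI impI)
      fix j assume "j \<le> length ss"
      then show "Re (sum_list (take (Suc j) (s # ss))) > real (Suc j)"
        using H[rule_format, of "Suc j"] by (simp del: take_Suc_Cons)
    qed
  next
    assume H: "\<forall>j\<le>length ss. Re (sum_list (take (Suc j) (s # ss))) > real (Suc j)"
    show "\<forall>i\<in>{1..Suc (length ss)}. Re (sum_list (take i (s # ss))) > real i"
    proof
      fix i assume "i \<in> {1..Suc (length ss)}"
      then obtain j where "i = Suc j" "j \<le> length ss" by (cases i) auto
      then show "Re (sum_list (take i (s # ss))) > real i" using H by auto
    qed
  qed
  also have "\<dots> \<longleftrightarrow> (\<forall>j\<le>length ss. Re s + sum_list (map Re (take j ss)) > real j + 1)"
    by (simp add: Re_sum_list add.commute)
  finally show ?thesis .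
qed

lemma main_bound:
  assumes "N \<ge> 1" "length zs = length ss" "\<forall>w\<in>set zs. norm w \<le> 1" "in_U (s # ss)"
  shows "\<exists>C e. 0 \<le> e \<and> e < Re s - 1 \<and> 0 \<le> C \<and>
           (\<forall>n\<ge>1. norm (Li_star_fin zs ss N n) \<le> C * real n powr e)"
proof -
  have U: "\<forall>j\<le>length ss. Re s + sum_list (map Re (take j ss)) > real j + 1"
    using assms(4) by (simp add: in_U_Cons)
  define S where "S = (\<lambda>i. real i - sum_list (take i (map Re ss))) ` {1..length ss}"
  have hS: "\<forall>x\<in>S. x < Re s - 1"
    using U unfolding S_def by (auto simp: take_map)
  have b: "0 < Re s - 1" using U[rule_format, of 0] by simp
  obtain e where e: "0 \<le> e" "e < Re s - 1" "\<forall>x\<in>S. x < e"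
    using choose_exp[OF _ hS b] unfolding S_def by auto
  have "\<forall>i\<in>{1..length (map Re ss)}. e > real i - sum_list (take i (map Re ss))"
    using e(3) unfolding S_def by auto
  from Ab_growth[OF assms(1) e(1) this] obtain C where
    C: "\<forall>M\<ge>1. Ab (map Re ss) N M \<le> C * real M powr e" by blast
  have C0: "C \<ge> 0" using C[rule_format, of 1] Ab_nonneg[of "map Re ss" N 1] by simp
  show ?thesis
    using e C0 C norm_Li_le[OF assms(2,3,1)] by (intro exI[of _ C] exI[of _ e]) (auto intro: order_trans)
qed

lemma tail_conv:
  fixes f :: "nat \<Rightarrow> complex"
  assumes "\<forall>n\<ge>N. norm (f n) \<le> g n" "summable g"
  shows "(\<lambda>M. \<Sum>n = N..M. f n) \<longlonglongrightarrow> (\<Sum>n. if N \<le> n then f n else 0)"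
proof -
  define h where "h n = (if N \<le> n then f n else 0)" for n
  have "summable h"
    by (rule summable_comparison_test_ev[OF _ assms(2)])
       (use assms(1) in \<open>auto simp: h_def eventually_at_top_linorder intro!: exI[of _ N]\<close>)
  then have "(\<lambda>M. \<Sum>n<M. h n) \<longlonglongrightarrow> suminf h" by (rule summable_LIMSEQ)
  then have "(\<lambda>M. \<Sum>n<Suc M. h n) \<longlonglongrightarrow> suminf h" by (rule LIMSEQ_Suc)
  moreover have "(\<Sum>n<Suc M. h n) = (\<Sum>n = N..M. f n)" for M
  proof -
    have "(\<Sum>n<Suc M. h n) = (\<Sum>n\<in>{N..M}. h n)"
      by (rule sum.mono_neutral_right) (auto simp: h_def)
    also have "\<dots> = (\<Sum>n = N..M. f n)" by (rule sum.cong) (auto simp: h_def)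
    finally show ?thesis .
  qed
  ultimately show ?thesis unfolding h_def by simp
qed

lemma Li_bound_k:
  assumes "N \<ge> 1" "length zs = length ss" "\<forall>w\<in>set (z # zs). norm w \<le> 1" "in_U (s # ss)"
  shows "\<exists>B. \<forall>k::nat. convergent (\<lambda>M. Li_star_fin (z # zs) ((s + of_nat k) # ss) N M) \<and>
           (\<forall>M. norm (Li_star_fin (z # zs) ((s + of_nat k) # ss) N M) \<le> B * (1 / real N) ^ k)"
proof -
  obtain C e where Ce: "0 \<le> e" "e < Re s - 1" "0 \<le> C"
    "\<forall>n\<ge>1. norm (Li_star_fin zs ss N n) \<le> C * real n powr e"
    using main_bound[OF assms(1,2) _ assms(4)] assms(3) by auto
  define p where "p = e - Re s"
  have p: "p < -1" using Ce unfolding p_def by simp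
  have summ: "summable (\<lambda>n. real n powr p)" using p by (simp add: summable_real_powr_iff)
  define Sm where "Sm = (\<Sum>n. real n powr p)"
  have tb: "norm (z ^ n / (of_nat n powr (s + of_nat k)) * Li_star_fin zs ss N n)
            \<le> C * real n powr p * (1 / real N) ^ k" if n: "n \<ge> N" for n k
  proof -
    have n1: "n \<ge> 1" using n assms(1) by auto
    have "(of_nat n powr (s + of_nat k) :: complex) = of_nat n powr s * of_nat n ^ k"
      using n1 by (simp add: powr_add)
    then have "norm (z ^ n / (of_nat n powr (s + of_nat k)) * Li_star_fin zs ss N n)
          = norm z ^ n * (real n powr (- Re s) * (1 / real n) ^ k) * norm (Li_star_fin zs ss N n)"
      using n1 by (simp add: norm_mult norm_divide norm_power powr_minus norm_inverse
                      divide_inverse power_inverse)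
    also have "\<dots> \<le> 1 * (real n powr (- Re s) * (1 / real N) ^ k) * (C * real n powr e)"
      using n1 n assms(3) Ce(4) assms(1)
      by (intro mult_mono power_mono) (auto simp: power_le_one divide_simps)
    also have "\<dots> = C * real n powr p * (1 / real N) ^ k"
      unfolding p_def by (simp add: powr_add[symmetric] mult_ac)
    finally show ?thesis .
  qed
  have B0: "0 \<le> C * Sm" using Ce(3) summ unfolding Sm_def by (intro mult_nonneg_nonneg suminf_nonneg) auto
  show ?thesis
  proof (intro exI[of _ "C * Sm"] allI conjI)
    fix k :: nat and M
    have "norm (Li_star_fin (z # zs) ((s + of_nat k) # ss) N M)
        \<le> (\<Sum>n = N..M. norm (z ^ n / (of_nat n powr (s + of_nat k)) * Li_star_fin zs ss N n))"
      by (simp add: norm_sum)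
    also have "\<dots> \<le> (\<Sum>n = N..M. C * real n powr p * (1 / real N) ^ k)"
      by (intro sum_mono tb) auto
    also have "\<dots> = C * (1 / real N) ^ k * (\<Sum>n = N..M. real n powr p)"
      by (simp add: sum_distrib_left mult_ac)
    also have "\<dots> \<le> C * (1 / real N) ^ k * Sm"
      unfolding Sm_def using Ce(3) by (intro mult_left_mono sum_le_suminf summ) auto
    finally show "norm (Li_star_fin (z # zs) ((s + of_nat k) # ss) N M) \<le> C * Sm * (1 / real N) ^ k"
      by (simp add: mult_ac)
  next
    fix k :: nat
    have "summable (\<lambda>n. C * real n powr p * (1 / real N) ^ k)"
      using summ by (intro summable_mult2 summable_mult)
    from tail_conv[OF _ this, of N "\<lambda>n. z ^ n / (of_nat n powr (s + of_nat k)) * Li_star_fin zs ss N n"]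
    show "convergent (\<lambda>M. Li_star_fin (z # zs) ((s + of_nat k) # ss) N M)"
      using tb by (auto simp: convergent_def)
  qed
qed

lemma boundary_tendsto:
  assumes "N \<ge> 1" "length zs = length ss" "\<forall>w\<in>set (z # zs). norm w \<le> 1" "in_U (s # ss)"
  shows "(\<lambda>M. z ^ M / (of_nat (Suc M) powr (s - 1)) * Li_star_fin zs ss N (Suc M)) \<longlonglongrightarrow> 0"
proof -
  obtain C e where Ce: "0 \<le> e" "e < Re s - 1" "0 \<le> C"
    "\<forall>n\<ge>1. norm (Li_star_fin zs ss N n) \<le> C * real n powr e"
    using main_bound[OF assms(1,2) _ assms(4)] assms(3) by auto
  have lim: "(\<lambda>M. C * real (Suc M) powr (e - (Re s - 1))) \<longlonglongrightarrow> C * 0"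
    using Ce(2)
    by (intro tendsto_mult tendsto_const tendsto_neg_powr filterlim_compose[OF filterlim_real_sequentially]
          filterlim_Suc) auto
  have lim0: "(\<lambda>M. C * real (Suc M) powr (e - (Re s - 1))) \<longlonglongrightarrow> 0"
    using lim by simp
  show ?thesis
  proof (rule Lim_null_comparison[OF _ lim0])
    show "\<forall>\<^sub>F M in sequentially. norm (z ^ M / (of_nat (Suc M) powr (s - 1)) * Li_star_fin zs ss N (Suc M))
           \<le> C * real (Suc M) powr (e - (Re s - 1))"
    proof (intro always_eventually allI)
      fix M :: nat
      have inv: "inverse (real (Suc M) powr (Re s - 1)) = real (Suc M) powr (-(Re s - 1))"
        by (subst powr_minus[symmetric]) (simp del: of_nat_Suc)
      have "norm (z ^ M / (of_nat (Suc M) powr (s - 1)) * Li_star_fin zs ss N (Suc M))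
          = norm z ^ M * real (Suc M) powr (- (Re s - 1)) * norm (Li_star_fin zs ss N (Suc M))"
        using inv by (simp add: norm_mult norm_divide norm_power norm_inverse divide_inverse
              del: of_nat_Suc)
      also have "\<dots> \<le> 1 * real (Suc M) powr (- (Re s - 1)) * (C * real (Suc M) powr e)"
        using assms(3) Ce(4)
        by (intro mult_mono) (auto simp: power_le_one simp del: of_nat_Suc)
      also have "\<dots> = C * real (Suc M) powr (e - (Re s - 1))"
        by (simp add: powr_add[symmetric] mult_ac algebra_simps del: of_nat_Suc)
      finally show "norm (z ^ M / (of_nat (Suc M) powr (s - 1)) * Li_star_fin zs ss N (Suc M))
           \<le> C * real (Suc M) powr (e - (Re s - 1))" .
    qed
  qed
qed

lemma binom_diff:
  fixes s :: complex and n :: nat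
  assumes "n \<ge> 2"
  shows "(\<lambda>k. (-1) ^ k * pochhammer (s - 1) (k + 1) / fact (k + 1) * (1 / of_nat n powr (s + of_nat k)))
           sums (1 / of_nat n powr (s - 1) - 1 / of_nat (Suc n) powr (s - 1))"
proof -
  define b where "b = -(s - 1)"
  have "\<bar>1::real\<bar> < \<bar>real n\<bar>" using assms by simp
  from gen_binomial_complex''[OF this, of b]
  have "(\<lambda>k. (b gchoose k) * of_nat n powr (b - of_nat k)) sums (of_nat (Suc n) powr b)"
    by (simp add: add.commute)
  then have "(\<lambda>k. (b gchoose (Suc k)) * of_nat n powr (b - of_nat (Suc k))) sums
               (of_nat (Suc n) powr b - of_nat n powr b)"
    by (subst sums_Suc_iff) simp
  then have "(\<lambda>k. - ((b gchoose (Suc k)) * of_nat n powr (b - of_nat (Suc k)))) sums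
               (of_nat n powr b - of_nat (Suc n) powr b)"
    using sums_minus by fastforce
  moreover have "- ((b gchoose (Suc k)) * of_nat n powr (b - of_nat (Suc k))) =
     (-1) ^ k * pochhammer (s - 1) (k + 1) / fact (k + 1) * (1 / of_nat n powr (s + of_nat k))" for k
  proof -
    have e: "b - of_nat (Suc k) = - (s + of_nat k)" unfolding b_def by simp
    show ?thesis unfolding e gbinomial_pochhammer powr_minus_divide
      by (simp add: b_def)
  qed
  moreover have "of_nat n powr b - of_nat (Suc n) powr b =
      1 / of_nat n powr (s - 1) - 1 / of_nat (Suc n) powr (s - 1)"
    unfolding b_def powr_minus_divide by simp
  ultimately show ?thesis by simp
qed


lemma coef_summable:
  fixes s :: complex
  assumes "N \<ge> 2"
  shows "summable (\<lambda>k. norm ((-1) ^ k * pochhammer (s - 1) (k + 1) / fact (k + 1) :: complex) * (1 / real N) ^ k)"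
proof -
  define b where "b = -(s - 1)"
  define z :: complex where "z = of_real (1 / real N)"
  have nz: "norm z < 1" using assms unfolding z_def by (simp add: norm_divide)
  have "ereal (norm z) < conv_radius (\<lambda>n. b gchoose n)"
    using nz by (simp add: conv_radius_gchoose)
  from abs_summable_in_conv_radius[OF this]
  have "summable (\<lambda>n. norm ((b gchoose n) * z ^ n))" .
  then have "summable (\<lambda>k. norm ((b gchoose Suc k) * z ^ Suc k))"
    by (subst summable_Suc_iff)
  then have summ: "summable (\<lambda>k. real N * norm ((b gchoose Suc k) * z ^ Suc k))"
    by (rule summable_mult)
  have eq: "(\<lambda>k. real N * norm ((b gchoose Suc k) * z ^ Suc k)) = (\<lambda>k.
     norm ((-1) ^ k * pochhammer (s - 1) (k + 1) / fact (k + 1) :: complex) * (1 / real N) ^ k)"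
  proof
    fix k
    show "real N * norm ((b gchoose Suc k) * z ^ Suc k) =
     norm ((-1) ^ k * pochhammer (s - 1) (k + 1) / fact (k + 1) :: complex) * (1 / real N) ^ k"
    using assms unfolding z_def b_def gbinomial_pochhammer
    by (simp add: norm_mult norm_divide norm_power del: of_nat_Suc fact_Suc)
  qed
  show ?thesis using summ unfolding eq .
qed

lemma abel_identity:
  fixes z :: complex and v R :: "nat \<Rightarrow> complex"
  assumes "z \<noteq> 0" "N \<ge> 1"
  shows "(\<Sum>n=N..N - 1 + d. z^n * (v n - v (Suc n)) * R n) =
    (1 - 1/z) * (\<Sum>n=N..N - 1 + d. z^n * v n * R n) - z^(N - 1 + d) * v (Suc (N - 1 + d)) * R (Suc (N - 1 + d))
    + (1/z) * ((\<Sum>m=N..Suc (N - 1 + d). z^m * v m * (R m - R (m - 1))) + z^N * v N * R (N - 1))"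
proof (induction d)
  case 0
  have e: "Suc (N - 1) = N" using assms by simp
  have "z ^ (N - 1) = z ^ N / z" using assms
    by (metis e nonzero_mult_div_cancel_left power_Suc)
  then show ?case using assms by (simp add: e field_simps)
next
  case (Suc d)
  define M where "M = N - 1 + d"
  have M: "N - 1 + Suc d = Suc M" "Suc M \<ge> N" "Suc (Suc M) \<ge> N" using assms unfolding M_def by auto
  have IH: "(\<Sum>n=N..M. z^n * (v n - v (Suc n)) * R n) =
    (1 - 1/z) * (\<Sum>n=N..M. z^n * v n * R n) - z^M * v (Suc M) * R (Suc M)
    + (1/z) * ((\<Sum>m=N..Suc M. z^m * v m * (R m - R (m - 1))) + z^N * v N * R (N - 1))"
    using Suc.IH unfolding M_def .
  define A where "A = (\<Sum>n=N..M. z^n * (v n - v (Suc n)) * R n)"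
  define F where "F = (\<Sum>n=N..M. z^n * v n * R n)"
  define H where "H = (\<Sum>m=N..Suc M. z^m * v m * (R m - R (m - 1)))"
  have s1: "(\<Sum>n=N..Suc M. z^n * (v n - v (Suc n)) * R n) = A + z^Suc M * (v (Suc M) - v (Suc (Suc M))) * R (Suc M)"
    unfolding A_def using M by simp
  have s2: "(\<Sum>n=N..Suc M. z^n * v n * R n) = F + z^Suc M * v (Suc M) * R (Suc M)"
    unfolding F_def using M by simp
  have s3: "(\<Sum>m=N..Suc (Suc M). z^m * v m * (R m - R (m - 1))) = H + z^Suc (Suc M) * v (Suc (Suc M)) * (R (Suc (Suc M)) - R (Suc M))"
    unfolding H_def using M by simp
  have IH': "A = (1 - 1/z) * F - z^M * v (Suc M) * R (Suc M) + (1/z) * (H + z^N * v N * R (N - 1))"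
    using IH unfolding A_def F_def H_def .
  show ?case unfolding M s1 s2 s3 IH'
    using assms by (simp add: field_simps)
qed


lemma lim_scale:
  fixes F :: "nat \<Rightarrow> complex"
  assumes "(\<lambda>M. w * F M) \<longlonglongrightarrow> X"
  shows "w * lim F = X"
proof (cases "w = 0")
  case True
  then have "(\<lambda>M. w * F M) \<longlonglongrightarrow> 0" by simp
  with assms have "X = 0" using LIMSEQ_unique by blast
  then show ?thesis using True by simp
next
  case False
  have "(\<lambda>M. (w * F M) / w) \<longlonglongrightarrow> X / w" by (intro tendsto_divide assms tendsto_const False)
  then have "F \<longlonglongrightarrow> X / w" using False by simp
  then have "lim F = X / w" by (rule limI)
  then show ?thesis using False by simp
qed



lemma core:
  fixes z s :: complex and zs ss :: "complex list" and N :: nat and K :: complex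
  assumes N2: "N \<ge> 2" and len: "length zs = length ss" and nrm: "\<forall>w\<in>set (z # zs). norm w \<le> 1"
    and U: "in_U (s # ss)"
    and Hlim: "(\<lambda>M. \<Sum>m=N..M. z^m * (1 / of_nat m powr (s - 1)) *
                 (Li_star_fin zs ss N m - Li_star_fin zs ss N (m - 1))) \<longlonglongrightarrow> K"
  shows "(\<lambda>k. (-1) ^ k * pochhammer (s - 1) (k + 1) / fact (k + 1)
                 * Li_star_tail (z # zs) ((s + of_nat k) # ss) N)
         sums ((1 - 1 / z) * Li_star_tail (z # zs) ((s - 1) # ss) N
               + 1 / z * (K + z ^ N * (1 / of_nat N powr (s - 1)) * Li_star_fin zs ss N (N - 1)))"
proof -
  have N1: "N \<ge> 1" using N2 by simp
  define c where "c k = (-1) ^ k * pochhammer (s - 1) (k + 1) / fact (k + 1)" for k :: nat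
  define R where "R n = Li_star_fin zs ss N n" for n
  define v where "v n = 1 / (of_nat n powr (s - 1) :: complex)" for n :: nat
  define L where "L k = Li_star_fin (z # zs) ((s + of_nat k) # ss) N" for k :: nat
  define Lt where "Lt k = Li_star_tail (z # zs) ((s + of_nat k) # ss) N" for k :: nat
  define P where "P M = (\<Sum>n=N..M. z^n * (v n - v (Suc n)) * R n)" for M
  define F where "F = Li_star_fin (z # zs) ((s - 1) # ss) N"
  define H where "H M = (\<Sum>m=N..M. z^m * v m * (R m - R (m - 1)))" for M
  define E where "E = z ^ N * v N * R (N - 1)"
  obtain B where B: "\<And>k. convergent (L k)" "\<And>k M. norm (L k M) \<le> B * (1 / real N) ^ k"
    using Li_bound_k[OF N1 len nrm U] unfolding L_def by blast
  have Llim: "L k \<longlonglongrightarrow> Lt k" for k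
  proof -
    have "L k \<longlonglongrightarrow> lim (L k)" using B(1)[of k] by (simp only: convergent_LIMSEQ_iff)
    moreover have "lim (L k) = Lt k" unfolding Lt_def Li_star_tail_def L_def by (rule refl)
    ultimately show ?thesis by (simp only:)
  qed
  have csum: "summable (\<lambda>k. norm (c k) * (1 / real N) ^ k)"
    using coef_summable[OF N2, of s] unfolding c_def .
  have tann: "eventually (\<lambda>M. summable (\<lambda>k. norm (c k * L k M))) sequentially \<and>
           summable (\<lambda>k. norm (c k * Lt k)) \<and>
           ((\<lambda>M. suminf (\<lambda>k. c k * L k M)) \<longlonglongrightarrow> suminf (\<lambda>k. c k * Lt k))"
  proof (rule tannerys_theorem[where M = "\<lambda>k. B * (norm (c k) * (1 / real N) ^ k)"])
    show "\<And>k. (\<lambda>M. c k * L k M) \<longlonglongrightarrow> c k * Lt k"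
      by (intro tendsto_mult tendsto_const Llim)
    show "\<forall>\<^sub>F (k, M) in at_top \<times>\<^sub>F sequentially. norm (c k * L k M) \<le> B * (norm (c k) * (1 / real N) ^ k)"
    proof (intro always_eventually allI, clarify)
      fix k M
      have "norm (c k * L k M) = norm (c k) * norm (L k M)" by (simp add: norm_mult)
      also have "\<dots> \<le> norm (c k) * (B * (1 / real N) ^ k)" by (intro mult_left_mono B(2)) auto
      also have "\<dots> = B * (norm (c k) * (1 / real N) ^ k)" by (rule mult.left_commute)
      finally show "norm (c k * L k M) \<le> B * (norm (c k) * (1 / real N) ^ k)" .
    qed
    show "summable (\<lambda>k. B * (norm (c k) * (1 / real N) ^ k))" by (intro summable_mult csum)
  qed simp
  define T where "T = suminf (\<lambda>k. c k * Lt k)"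
  have Tsums: "(\<lambda>k. c k * Lt k) sums T"
  proof -
    have "summable (\<lambda>k. norm (c k * Lt k))" using tann by (elim conjE)
    then show ?thesis unfolding T_def by (rule summable_sums[OF summable_norm_cancel])
  qed
  have Psums: "(\<lambda>k. c k * L k M) sums P M" for M
  proof -
    have "(\<lambda>k. \<Sum>n\<in>{N..M}. c k * (1 / of_nat n powr (s + of_nat k)) * (z^n * R n)) sums
          (\<Sum>n\<in>{N..M}. (v n - v (Suc n)) * (z^n * R n))"
    proof (rule sums_sum)
      fix n assume n: "n \<in> {N..M}"
      then have "n \<ge> 2" using N2 by auto
      from sums_mult2[OF binom_diff[OF this, of s], of "z^n * R n"]
      show "(\<lambda>k. c k * (1 / of_nat n powr (s + of_nat k)) * (z^n * R n)) sums ((v n - v (Suc n)) * (z^n * R n))"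
        unfolding c_def v_def .
    qed
    moreover have "(\<Sum>n\<in>{N..M}. c k * (1 / of_nat n powr (s + of_nat k)) * (z^n * R n)) = c k * L k M" for k
      unfolding L_def R_def by (simp add: sum_distrib_left mult_ac)
    moreover have "(\<Sum>n\<in>{N..M}. (v n - v (Suc n)) * (z^n * R n)) = P M"
      unfolding P_def by (simp add: mult_ac)
    ultimately show ?thesis by simp
  qed
  have Plim: "P \<longlonglongrightarrow> T"
  proof -
    have "(\<lambda>M. suminf (\<lambda>k. c k * L k M)) \<longlonglongrightarrow> T" using tann unfolding T_def by blast
    moreover have "suminf (\<lambda>k. c k * L k M) = P M" for M using Psums[of M] by (simp add: sums_iff)
    ultimately show ?thesis by simp
  qed
  have Bd: "(\<lambda>M. z ^ M * v (Suc M) * R (Suc M)) \<longlonglongrightarrow> 0"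
    using boundary_tendsto[OF N1 len nrm U] unfolding v_def R_def by simp
  have Hs: "(\<lambda>M. H (Suc M)) \<longlonglongrightarrow> K"
    using LIMSEQ_Suc[OF Hlim] unfolding H_def v_def R_def by simp
  have ident: "eventually (\<lambda>M. (1 - 1/z) * F M = P M + z ^ M * v (Suc M) * R (Suc M) - (1/z) * (H (Suc M) + E)) sequentially"
  proof (rule eventually_mono[OF eventually_ge_at_top[of N]])
    fix M assume M: "N \<le> M"
    have Feq: "F M = (\<Sum>n=N..M. z^n * v n * R n)"
      unfolding F_def v_def R_def Li_star_fin.simps by (intro sum.cong refl) simp
    show "(1 - 1/z) * F M = P M + z ^ M * v (Suc M) * R (Suc M) - (1/z) * (H (Suc M) + E)"
    proof (cases "z = 0")
      case True
      have "P M = 0" unfolding P_def using True N1 by (intro sum.neutral) auto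
      moreover have "F M = 0" unfolding Feq using True N1 by (intro sum.neutral) auto
      moreover have "z ^ M = 0" using True M N1 by simp
      ultimately show ?thesis using True by simp
    next
      case False
      have MM: "N - 1 + (M - N + 1) = M" using M N1 by simp
      have "P M = (1 - 1/z) * F M - z ^ M * v (Suc M) * R (Suc M) + (1/z) * (H (Suc M) + E)"
        unfolding Feq P_def H_def E_def
        by (rule abel_identity[OF False N1, where v=v and R=R and d="M - N + 1", unfolded MM])
      then show ?thesis by simp
    qed
  qed
  have "(\<lambda>M. P M + z ^ M * v (Suc M) * R (Suc M) - (1/z) * (H (Suc M) + E)) \<longlonglongrightarrow> T + 0 - (1/z) * (K + E)"
    by (intro tendsto_intros Plim Bd Hs)
  then have "(\<lambda>M. (1 - 1/z) * F M) \<longlonglongrightarrow> T - (1/z) * (K + E)"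
    using ident by (simp add: tendsto_cong)
  then have "(1 - 1/z) * lim F = T - (1/z) * (K + E)" by (rule lim_scale)
  moreover have "lim F = Li_star_tail (z # zs) ((s - 1) # ss) N"
    unfolding Li_star_tail_def F_def by (rule refl)
  ultimately have "T = (1 - 1/z) * Li_star_tail (z # zs) ((s - 1) # ss) N + (1/z) * (K + E)"
    by (simp add: algebra_simps)
  with Tsums show ?thesis unfolding c_def Lt_def E_def v_def R_def by simp
qed



lemma in_U_merge:
  assumes "in_U (s1 # s2 # sr)"
  shows "in_U ((s1 + s2 - 1) # sr)"
proof -
  have U: "\<forall>j\<le>length (s2 # sr). Re s1 + sum_list (map Re (take j (s2 # sr))) > real j + 1"
    using assms by (simp only: in_U_Cons)
  show ?thesis unfolding in_U_Cons
  proof (intro allI impI)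
    fix j assume "j \<le> length sr"
    then have "Suc j \<le> length (s2 # sr)" by simp
    from U[rule_format, OF this]
    show "Re (s1 + s2 - 1) + sum_list (map Re (take j sr)) > real j + 1" by simp
  qed
qed

theorem proposition3:
  fixes z s :: "complex list" and N :: nat
  assumes "N \<ge> 2"
    and "length z = length s" and "length s \<ge> 1"
    and "\<forall>w\<in>set z. norm w \<le> 1"
    and "in_U s"
  shows "(length s = 1 \<longrightarrow>
           (\<lambda>k. (-1) ^ k * pochhammer (s!0 - 1) (k + 1) / fact (k + 1)
                 * Li_star_tail [z!0] [s!0 + of_nat k] N)
           sums ((1 - 1 / z!0) * Li_star_tail [z!0] [s!0 - 1] N
                 + (z!0) ^ (N - 1) / (of_nat N powr (s!0 - 1))))
       \<and> (length s > 1 \<longrightarrow>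
           (\<lambda>k. (-1) ^ k * pochhammer (s!0 - 1) (k + 1) / fact (k + 1)
                 * Li_star_tail z ((s!0 + of_nat k) # tl s) N)
           sums ((1 - 1 / z!0) * Li_star_tail z ((s!0 - 1) # tl s) N
                 + 1 / z!0 * Li_star_tail ((z!0 * z!1) # drop 2 z)
                                          ((s!0 + s!1 - 1) # drop 2 s) N))"
proof -
  note N2 = assms(1)
  have N1: "N \<ge> 1" using N2 by simp
  obtain s1 sr where s: "s = s1 # sr" using assms(3) by (cases s) auto
  obtain z1 zr where z: "z = z1 # zr" using assms(2,3) by (cases z) auto
  have lenr: "length zr = length sr" using assms(2) s z by simp
  have nrm: "\<forall>w\<in>set (z1 # zr). norm w \<le> 1" using assms(4) z by simp
  have U: "in_U (s1 # sr)" using assms(5) s by simp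
  show ?thesis
  proof (intro conjI impI)
    assume "length s = 1"
    then have sr: "sr = []" and zr: "zr = []" using s lenr by auto
    have Hlim: "(\<lambda>M. \<Sum>m=N..M. z1^m * (1 / of_nat m powr (s1 - 1)) *
                 (Li_star_fin [] [] N m - Li_star_fin [] [] N (m - 1))) \<longlonglongrightarrow> 0"
      by simp
    from core[OF N2 _ _ _ Hlim] nrm U sr zr
    have C: "(\<lambda>k. (-1) ^ k * pochhammer (s1 - 1) (k + 1) / fact (k + 1)
                 * Li_star_tail [z1] [s1 + of_nat k] N)
         sums ((1 - 1 / z1) * Li_star_tail [z1] [s1 - 1] N
               + 1 / z1 * (0 + z1 ^ N * (1 / of_nat N powr (s1 - 1)) * Li_star_fin [] [] N (N - 1)))"
      by simp
    have eq: "1 / z1 * (0 + z1 ^ N * (1 / of_nat N powr (s1 - 1)) * Li_star_fin [] [] N (N - 1))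
        = z1 ^ (N - 1) / (of_nat N powr (s1 - 1))"
    proof (cases "z1 = 0")
      case True
      then show ?thesis using N2 by simp
    next
      case False
      have "z1 ^ N = z1 * z1 ^ (N - 1)" using N1 by (metis Suc_diff_1 less_le_trans zero_less_one power_Suc)
      then show ?thesis using False by simp
    qed
    show "(\<lambda>k. (-1) ^ k * pochhammer (s!0 - 1) (k + 1) / fact (k + 1)
                 * Li_star_tail [z!0] [s!0 + of_nat k] N)
           sums ((1 - 1 / z!0) * Li_star_tail [z!0] [s!0 - 1] N
                 + (z!0) ^ (N - 1) / (of_nat N powr (s!0 - 1)))"
      using C unfolding eq s z by simp
  next
    assume "length s > 1"
    then obtain s2 sr' where sr: "sr = s2 # sr'" using s by (cases sr) auto
    then obtain z2 zr' where zr: "zr = z2 # zr'" using lenr by (cases zr) auto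
    have lenr': "length zr' = length sr'" using lenr sr zr by simp
    define G where "G = Li_star_fin ((z1 * z2) # zr') ((s1 + s2 - 1) # sr') N"
    define K where "K = Li_star_tail ((z1 * z2) # zr') ((s1 + s2 - 1) # sr') N"
    have nrm2: "\<forall>w\<in>set ((z1 * z2) # zr'). norm w \<le> 1"
      using nrm zr by (auto simp: norm_mult intro: mult_le_one)
    have U2: "in_U ((s1 + s2 - 1) # sr')" using in_U_merge U sr by simp
    obtain B where "\<And>k. convergent (\<lambda>M. Li_star_fin ((z1 * z2) # zr') ((s1 + s2 - 1 + of_nat k) # sr') N M)"
      using Li_bound_k[OF N1 lenr' nrm2 U2] by blast
    from this[of 0] have "convergent G" unfolding G_def by (simp only: of_nat_0 add_0_right)
    then have Glim: "G \<longlonglongrightarrow> K"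
      unfolding K_def Li_star_tail_def G_def[symmetric] by (simp only: convergent_LIMSEQ_iff)
    have HG: "(\<Sum>m=N..M. z1^m * (1 / of_nat m powr (s1 - 1)) *
                 (Li_star_fin (z2 # zr') (s2 # sr') N m - Li_star_fin (z2 # zr') (s2 # sr') N (m - 1)))
          = G M" for M
      unfolding G_def Li_star_fin.simps(2)[of "z1 * z2"]
    proof (intro sum.cong refl)
      fix m assume m: "m \<in> {N..M}"
      then have m1: "m \<ge> 1" and mN: "\<not> Suc (m - 1) < N" using N1 by auto
      have msuc: "Suc (m - 1) = m" using m1 by simp
      have diff: "Li_star_fin (z2 # zr') (s2 # sr') N m - Li_star_fin (z2 # zr') (s2 # sr') N (m - 1)
          = z2 ^ m / (of_nat m powr s2) * Li_star_fin zr' sr' N m"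
      proof -
        obtain m' where m': "m = Suc m'" using m1 by (cases m) auto
        have "Li_star_fin (z2 # zr') (s2 # sr') N (Suc m') = Li_star_fin (z2 # zr') (s2 # sr') N m'
              + z2 ^ Suc m' / (of_nat (Suc m') powr s2) * Li_star_fin zr' sr' N (Suc m')"
          using mN m' by (simp del: of_nat_Suc)
        then show ?thesis unfolding m' by simp
      qed
      have pw: "(of_nat m powr (s1 + s2 - 1) :: complex) = of_nat m powr (s1 - 1) * of_nat m powr s2"
      proof -
        have "s1 + s2 - 1 = (s1 - 1) + s2" by simp
        then show ?thesis by (simp only: powr_add)
      qed
      show "z1^m * (1 / of_nat m powr (s1 - 1)) *
                 (Li_star_fin (z2 # zr') (s2 # sr') N m - Li_star_fin (z2 # zr') (s2 # sr') N (m - 1))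
          = (z1 * z2) ^ m / (of_nat m powr (s1 + s2 - 1)) * Li_star_fin zr' sr' N m"
        unfolding diff pw by (simp add: power_mult_distrib)
    qed
    have Hlim: "(\<lambda>M. \<Sum>m=N..M. z1^m * (1 / of_nat m powr (s1 - 1)) *
                 (Li_star_fin (z2 # zr') (s2 # sr') N m - Li_star_fin (z2 # zr') (s2 # sr') N (m - 1))) \<longlonglongrightarrow> K"
      unfolding HG using Glim .
    have lenc: "length (z2 # zr') = length (s2 # sr')" using lenr' by simp
    from core[OF N2 lenc _ _ Hlim] nrm U sr zr
    have C: "(\<lambda>k. (-1) ^ k * pochhammer (s1 - 1) (k + 1) / fact (k + 1)
                 * Li_star_tail (z1 # z2 # zr') ((s1 + of_nat k) # s2 # sr') N)
         sums ((1 - 1 / z1) * Li_star_tail (z1 # z2 # zr') ((s1 - 1) # s2 # sr') N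
               + 1 / z1 * (K + z1 ^ N * (1 / of_nat N powr (s1 - 1)) * Li_star_fin (z2 # zr') (s2 # sr') N (N - 1)))"
      by simp
    have z0: "Li_star_fin (z2 # zr') (s2 # sr') N (N - 1) = 0" using N1 by simp
    show "(\<lambda>k. (-1) ^ k * pochhammer (s!0 - 1) (k + 1) / fact (k + 1)
                 * Li_star_tail z ((s!0 + of_nat k) # tl s) N)
           sums ((1 - 1 / z!0) * Li_star_tail z ((s!0 - 1) # tl s) N
                 + 1 / z!0 * Li_star_tail ((z!0 * z!1) # drop 2 z)
                                          ((s!0 + s!1 - 1) # drop 2 s) N)"
      using C unfolding z0 s z sr zr K_def by simp
  qed
qed

end
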